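(* Suppose $L_p,\Psi_p$ satisfy $(A_p-L_pC_p)\Psi_p\oplus\mathbb{W}_p\oplus(-L_p\mathbb{V}_p)\subseteq\Psi_p$ with $0\in\Psi_p$, and suppose $H\in\mathbb{N}$, $K_p$, $\Omega_p\ni0$ and $(\mu,\eta,\Omega)$ are given by one of the following three options: (ZOH) $(A_p^i+B_p^iK_p)\Omega_p\oplus\big(\bigoplus_{j=0}^{i-1}A_p^jL_p(C_p\Psi_p\oplus\mathbb{V}_p)\big)\subseteq\Omega_p$ for all $i\in\{1,\dots,H\}$, $\mu(\bar\nu_c,\hat x_p,\bar x_p)=\bar\nu_c+K_p(\hat x_p-\bar x_p)$, $\eta\equiv0$, $\Omega=\Omega_p\times K_p\Omega_p\times\{0\}$; (prediction-based) $(A_p+B_pK_p)^i\Omega_p\oplus\big(\bigoplus_{j=0}^{i-1}A_p^jL_p(C_p\Psi_p\oplus\mathbb{V}_p)\big)\subseteq\Omega_p$ for all $i\in\{1,\dots,H\}$, $\mu(\bar\nu_c,\hat x_p,\bar x_p)=\bar\nu_c$, $\eta(\hat x_p,\tilde x_p,\bar x_p)=K_p(\tilde x_p-\bar x_p)$, $\Omega=\Omega_p\times\{0\}\times\{0\}$; (local measurement) $(A_p+B_pK_p)\Omega_p\oplus L_p(C_p\Psi_p\oplus\mathbb{V}_p)\subseteq\Omega_p$, $\mu(\bar\nu_c,\hat x_p,\bar x_p)=\bar\nu_c$, $\eta(\hat x_p,\tilde x_p,\bar x_p)=K_p(\hat x_p-\bar x_p)$, $\Omega=\Omega_p\times\{0\}\times\{0\}$.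 Let $t\in\mathbb{N}_0$, $h\in\{1,\dots,H\}$, and let nominal inputs $\bar u(i)=(\bar u_c(i),\bar\gamma(i),0)$, $i=t,\dots,t+h-1$, be given with $\bar\gamma(t)=1$ and $\bar\gamma(i)=0$ for $i\in\{t+1,\dots,t+h-1\}$. Let $x(t),\hat x(t),\bar x(t)$ be given with $\hat x(t)-\bar x(t)\in\Omega$ and $x(t)-\hat x(t)\in\Psi:=\Psi_p\times\{0\}\times\{0\}$, and set $\tilde x(t):=\hat x(t)$. For $i=t,\dots,t+h-1$ apply $u(i):=\phi'(\bar u(i),\hat x(i),\tilde x(i),\bar x(i))$ if $\bar\gamma(i)=1$ and $u(i):=\phi''(\bar u(i),\hat x(i),\tilde x(i),\bar x(i))$ if $\bar\gamma(i)=0$, and let the states evolve by $\bar x(i+1)=f(\bar x(i),\bar u(i))$, $\tilde x(i+1)=f(\tilde x(i),u(i))$, $x(i+1)=f(x(i),u(i))+w(i)$, $\hat x(i+1)=f(\hat x(i),u(i))+B_\epsilon(x(i)-\hat x(i))+B_vv(i)$. Then for all sequences $w(i)\in\mathbb{W}$, $v(i)\in\mathbb{V}$ ($i=t,\dots,t+h-1$) it holds for all $i\in\{t,\dots,t+h\}$ that $\hat x(i)\in\{\bar x(i)\}\oplus\Omega$ and $x(i)\in\{\hat x(i)\}\oplus\Psi\subseteq\{\bar x(i)\}\oplus\Omega\oplus\Psi$.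
   Context: $A_p\in\mathbb{R}^{n_p\times n_p}$, $B_p\in\mathbb{R}^{n_p\times m_p}$, $C_p\in\mathbb{R}^{q_p\times n_p}$; $\mathbb{W}_p\subseteq\mathbb{R}^{n_p}$, $\mathbb{V}_p\subseteq\mathbb{R}^{q_p}$ compact convex sets containing the origin; $L_p\in\mathbb{R}^{n_p\times q_p}$, $K_p\in\mathbb{R}^{m_p\times n_p}$; $B_p^i:=\sum_{j=0}^{i-1}A_p^jB_p$; integers $g\ge1$, $c\ge g$, $b\ge c$. Overall state $x=(x_p,u_s,\beta)\in\mathbb{R}^{n_p}\times\mathbb{R}^{m_p}\times\mathbb{R}$ (similarly $\hat x,\tilde x,\bar x$ with components $\hat x_p$ etc.), input $u=(u_c,\gamma,u_e)\in\mathbb{R}^{m_p}\times\{0,1\}\times\mathbb{R}^{m_p}$, $$f(x,u):=\begin{bmatrix}A_px_p+B_p((1-\gamma)u_s+\gamma u_c+u_e)\\ (1-\gamma)u_s+\gamma u_c\\ \min\{\beta+g-\gamma c,\,b\}\end{bmatrix}.$$ $\mathbb{W}:=\mathbb{W}_p\times\{0\}\times\{0\}$, $\mathbb{V}:=\mathbb{V}_p\times\{0\}\times\{0\}$, $B_\epsilon:=\mathrm{diag}\{L_pC_p,0,0\}$, $B_v:=\mathrm{diag}\{L_p,0,0\}$. For $\bar u=(\bar u_c,\bar\gamma,\cdot)$: $\phi'(\bar u,\hat x,\tilde x,\bar x):=(\mu(\bar u_c,\hat x_p,\bar x_p),1,\eta(\hat x_p,\tilde x_p,\bar x_p))$ and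 $\phi''(\bar u,\hat x,\tilde x,\bar x):=(0,0,\eta(\hat x_p,\tilde x_p,\bar x_p))$. $\oplus$ is Minkowski sum. *)

theory Defs
  imports "HOL-Analysis.Analysis"
begin

definition msum :: "'a::plus set \<Rightarrow> 'a set \<Rightarrow> 'a set" where
  "msum X Y = {x + y | x y. x \<in> X \<and> y \<in> Y}"

fun msumN :: "nat \<Rightarrow> (nat \<Rightarrow> 'a::monoid_add set) \<Rightarrow> 'a set" where
  "msumN 0 S = {0}"
| "msumN (Suc k) S = msum (msumN k S) (S k)"

definition lin :: "((real^'n)^'m) \<Rightarrow> (real^'n) set \<Rightarrow> (real^'m) set" where
  "lin M X = (\<lambda>x. M *v x) ` X"

definition mpow :: "((real^'n)^'n) \<Rightarrow> nat \<Rightarrow> ((real^'n)^'n)" where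
  "mpow A i = ((\<lambda>M. A ** M) ^^ i) (mat 1)"

definition Bpow :: "((real^'n)^'n) \<Rightarrow> ((real^'m)^'n) \<Rightarrow> nat \<Rightarrow> ((real^'m)^'n)" where
  "Bpow A B i = (\<Sum>j<i. mpow A j ** B)"

definition fsys :: "((real^'n)^'n) \<Rightarrow> ((real^'m)^'n) \<Rightarrow> int \<Rightarrow> int \<Rightarrow> int
    \<Rightarrow> ((real^'n) \<times> (real^'m) \<times> real) \<Rightarrow> ((real^'m) \<times> real \<times> (real^'m))
    \<Rightarrow> ((real^'n) \<times> (real^'m) \<times> real)" where
  "fsys A B g c b x u =
     (case x of (xp, us, \<beta>) \<Rightarrow> case u of (uc, \<gamma>, ue) \<Rightarrow>
       (A *v xp + B *v ((1 - \<gamma>) *\<^sub>R us + \<gamma> *\<^sub>R uc + ue),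
        (1 - \<gamma>) *\<^sub>R us + \<gamma> *\<^sub>R uc,
        min (\<beta> + of_int g - \<gamma> * of_int c) (of_int b)))"

definition LCPV :: "((real^'q)^'n) \<Rightarrow> ((real^'n)^'q) \<Rightarrow> (real^'n) set \<Rightarrow> (real^'q) set \<Rightarrow> (real^'n) set" where
  "LCPV L C Psip Vp = lin L (msum (lin C Psip) Vp)"

definition opt_ZOH :: "((real^'n)^'n) \<Rightarrow> ((real^'m)^'n) \<Rightarrow> ((real^'q)^'n) \<Rightarrow> ((real^'n)^'q) \<Rightarrow> ((real^'n)^'m)
    \<Rightarrow> (real^'n) set \<Rightarrow> (real^'q) set \<Rightarrow> nat \<Rightarrow> (real^'n) set
    \<Rightarrow> ((real^'m) \<Rightarrow> (real^'n) \<Rightarrow> (real^'n) \<Rightarrow> (real^'m))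
    \<Rightarrow> ((real^'n) \<Rightarrow> (real^'n) \<Rightarrow> (real^'n) \<Rightarrow> (real^'m))
    \<Rightarrow> ((real^'n) \<times> (real^'m) \<times> real) set \<Rightarrow> bool" where
  "opt_ZOH A B L C K Psip Vp H Omegap \<mu> \<eta> Omega \<longleftrightarrow>
     (\<forall>i\<in>{1..H}. msum (lin (mpow A i + Bpow A B i ** K) Omegap)
                        (msumN i (\<lambda>j. lin (mpow A j) (LCPV L C Psip Vp))) \<subseteq> Omegap)
   \<and> (\<forall>\<nu> xh xb. \<mu> \<nu> xh xb = \<nu> + K *v (xh - xb))
   \<and> (\<forall>xh xt xb. \<eta> xh xt xb = 0)
   \<and> Omega = Omegap \<times> lin K Omegap \<times> {0}"

definition opt_pred :: "((real^'n)^'n) \<Rightarrow> ((real^'m)^'n) \<Rightarrow> ((real^'q)^'n) \<Rightarrow> ((real^'n)^'q) \<Rightarrow> ((real^'n)^'m)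
    \<Rightarrow> (real^'n) set \<Rightarrow> (real^'q) set \<Rightarrow> nat \<Rightarrow> (real^'n) set
    \<Rightarrow> ((real^'m) \<Rightarrow> (real^'n) \<Rightarrow> (real^'n) \<Rightarrow> (real^'m))
    \<Rightarrow> ((real^'n) \<Rightarrow> (real^'n) \<Rightarrow> (real^'n) \<Rightarrow> (real^'m))
    \<Rightarrow> ((real^'n) \<times> (real^'m) \<times> real) set \<Rightarrow> bool" where
  "opt_pred A B L C K Psip Vp H Omegap \<mu> \<eta> Omega \<longleftrightarrow>
     (\<forall>i\<in>{1..H}. msum (lin (mpow (A + B ** K) i) Omegap)
                        (msumN i (\<lambda>j. lin (mpow A j) (LCPV L C Psip Vp))) \<subseteq> Omegap)
   \<and> (\<forall>\<nu> xh xb. \<mu> \<nu> xh xb = \<nu>)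
   \<and> (\<forall>xh xt xb. \<eta> xh xt xb = K *v (xt - xb))
   \<and> Omega = Omegap \<times> {0} \<times> {0}"

definition opt_local :: "((real^'n)^'n) \<Rightarrow> ((real^'m)^'n) \<Rightarrow> ((real^'q)^'n) \<Rightarrow> ((real^'n)^'q) \<Rightarrow> ((real^'n)^'m)
    \<Rightarrow> (real^'n) set \<Rightarrow> (real^'q) set \<Rightarrow> (real^'n) set
    \<Rightarrow> ((real^'m) \<Rightarrow> (real^'n) \<Rightarrow> (real^'n) \<Rightarrow> (real^'m))
    \<Rightarrow> ((real^'n) \<Rightarrow> (real^'n) \<Rightarrow> (real^'n) \<Rightarrow> (real^'m))
    \<Rightarrow> ((real^'n) \<times> (real^'m) \<times> real) set \<Rightarrow> bool" where
  "opt_local A B L C K Psip Vp Omegap \<mu> \<eta> Omega \<longleftrightarrow>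
     msum (lin (A + B ** K) Omegap) (LCPV L C Psip Vp) \<subseteq> Omegap
   \<and> (\<forall>\<nu> xh xb. \<mu> \<nu> xh xb = \<nu>)
   \<and> (\<forall>xh xt xb. \<eta> xh xt xb = K *v (xh - xb))
   \<and> Omega = Omegap \<times> {0} \<times> {0}"

definition phi1 :: "((real^'m) \<Rightarrow> (real^'n) \<Rightarrow> (real^'n) \<Rightarrow> (real^'m))
    \<Rightarrow> ((real^'n) \<Rightarrow> (real^'n) \<Rightarrow> (real^'n) \<Rightarrow> (real^'m))
    \<Rightarrow> ((real^'m) \<times> real \<times> (real^'m)) \<Rightarrow> ((real^'n) \<times> (real^'m) \<times> real)
    \<Rightarrow> ((real^'n) \<times> (real^'m) \<times> real) \<Rightarrow> ((real^'n) \<times> (real^'m) \<times> real)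
    \<Rightarrow> ((real^'m) \<times> real \<times> (real^'m))" where
  "phi1 \<mu> \<eta> ub xh xt xb = (\<mu> (fst ub) (fst xh) (fst xb), 1, \<eta> (fst xh) (fst xt) (fst xb))"

definition phi2 :: "((real^'n) \<Rightarrow> (real^'n) \<Rightarrow> (real^'n) \<Rightarrow> (real^'m))
    \<Rightarrow> ((real^'m) \<times> real \<times> (real^'m)) \<Rightarrow> ((real^'n) \<times> (real^'m) \<times> real)
    \<Rightarrow> ((real^'n) \<times> (real^'m) \<times> real) \<Rightarrow> ((real^'n) \<times> (real^'m) \<times> real)
    \<Rightarrow> ((real^'m) \<times> real \<times> (real^'m))" where
  "phi2 \<eta> ub xh xt xb = (0, 0, \<eta> (fst xh) (fst xt) (fst xb))"

end

theory Submission
  imports Defs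
begin


lemma mzero_mul[simp]: "(0::real^'n^'m) ** (K::real^'k^'n) = 0"
  by (simp add: matrix_matrix_mult_def vec_eq_iff)
lemma mul_mzero[simp]: "(A::real^'n^'m) ** (0::real^'k^'n) = 0"
  by (simp add: matrix_matrix_mult_def vec_eq_iff)
lemma uminus_mv: "(- (L::real^'n^'m)) *v y = - (L *v y)"
  by (simp add: matrix_vector_mult_def vec_eq_iff sum_negf)

lemma mpow_0[simp]: "mpow A 0 = mat 1" by (simp add: mpow_def)
lemma mpow_Suc: "mpow A (Suc k) = A ** mpow A k" by (simp add: mpow_def)

lemma Bpow_Suc: "Bpow A B (Suc k) = A ** Bpow A B k + B"
proof (induction k)
  case 0 then show ?case by (simp add: Bpow_def)
next
  case (Suc k)
  have "Bpow A B (Suc (Suc k)) = Bpow A B (Suc k) + mpow A (Suc k) ** B"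
    by (simp add: Bpow_def)
  also have "\<dots> = A ** Bpow A B k + B + A ** (mpow A k ** B)"
    by (simp add: Suc mpow_Suc matrix_mul_assoc)
  also have "\<dots> = A ** (Bpow A B k + mpow A k ** B) + B"
    by (simp add: matrix_add_ldistrib)
  also have "Bpow A B k + mpow A k ** B = Bpow A B (Suc k)" by (simp add: Bpow_def)
  finally show ?case .
qed

lemma msum_mem: "a \<in> X \<Longrightarrow> b \<in> Y \<Longrightarrow> a + b \<in> msum X Y"
  by (auto simp: msum_def)

lemma msumN_iff: "z \<in> msumN k S \<longleftrightarrow> (\<exists>f. (\<forall>j<k. f j \<in> S j) \<and> z = (\<Sum>j<k. f j))"
proof (induction k arbitrary: z)
  case 0 then show ?case by simp
next
  case (Suc k)
  show ?case
  proof
    assume "z \<in> msumN (Suc k) S"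
    then obtain a bb where ab: "z = a + bb" "a \<in> msumN k S" "bb \<in> S k"
      by (auto simp: msum_def)
    then obtain f where f: "\<forall>j<k. f j \<in> S j" "a = (\<Sum>j<k. f j)" using Suc by blast
    let ?f = "f(k := bb)"
    have "(\<Sum>j<k. ?f j) = (\<Sum>j<k. f j)" by (rule sum.cong) auto
    then have "z = (\<Sum>j<Suc k. ?f j)" using ab f by (simp add: add.commute)
    moreover have "\<forall>j<Suc k. ?f j \<in> S j" using f ab by (auto simp: less_Suc_eq)
    ultimately show "\<exists>f. (\<forall>j<Suc k. f j \<in> S j) \<and> z = (\<Sum>j<Suc k. f j)" by blast
  next
    assume "\<exists>f. (\<forall>j<Suc k. f j \<in> S j) \<and> z = (\<Sum>j<Suc k. f j)"
    then obtain f where f: "\<forall>j<Suc k. f j \<in> S j" "z = (\<Sum>j<Suc k. f j)" by blast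
    have "(\<Sum>j<k. f j) \<in> msumN k S" using Suc.IH f by (metis less_SucI)
    then show "z \<in> msumN (Suc k) S" using f by (auto simp: msum_def)
  qed
qed

lemma mv_sum: "(A::real^'n^'m) *v (\<Sum>j<(k::nat). f j) = (\<Sum>j<k. A *v f j)"
  by (induction k) (simp_all add: matrix_vector_right_distrib)

lemma T_step:
  fixes A :: "real^'n^'n"
  assumes "d \<in> msumN k (\<lambda>j. lin (mpow A j) N)" "nn \<in> N"
  shows "A *v d + nn \<in> msumN (Suc k) (\<lambda>j. lin (mpow A j) N)"
proof -
  obtain f where f: "\<forall>j<k. f j \<in> lin (mpow A j) N" "d = (\<Sum>j<k. f j)"
    using msumN_iff[THEN iffD1, OF assms(1)] by blast
  define f' where "f' j = (case j of 0 \<Rightarrow> nn | Suc i \<Rightarrow> A *v f i)" for j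
  have f'0: "f' 0 = nn" and f'S: "\<And>i. f' (Suc i) = A *v f i" by (simp_all add: f'_def)
  have s1: "(\<Sum>j<Suc k. f' j) = f' 0 + (\<Sum>j<k. f' (Suc j))" by (rule sum.lessThan_Suc_shift)
  have s2: "(\<Sum>j<k. f' (Suc j)) = A *v d" unfolding f'S f(2) mv_sum ..
  have e: "A *v d + nn = (\<Sum>j<Suc k. f' j)" unfolding s1 s2 f'0 by (rule add.commute)
  have "\<forall>j<Suc k. f' j \<in> lin (mpow A j) N"
  proof (intro allI impI)
    fix j assume j: "j < Suc k"
    show "f' j \<in> lin (mpow A j) N"
    proof (cases j)
      case 0 then show ?thesis using assms(2) by (simp add: f'0 lin_def)
    next
      case (Suc j')
      then have "f j' \<in> lin (mpow A j') N" using f j by auto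
      then obtain y where y: "y \<in> N" "f j' = mpow A j' *v y" by (auto simp: lin_def)
      have "f' j = mpow A j *v y" using Suc y by (simp only: f'S mpow_Suc matrix_vector_mul_assoc)
      then show ?thesis using y(1) by (simp add: lin_def)
    qed
  qed
  then show ?thesis unfolding e by (rule msumN_iff[THEN iffD2, OF exI, OF conjI, OF _ refl])
qed

lemma fsys_fst: "fst (fsys A B g c b x u) = A *v fst x + B *v ((1 - fst (snd u)) *\<^sub>R fst (snd x) + fst (snd u) *\<^sub>R fst u + snd (snd u))"
  by (simp add: fsys_def split: prod.splits)
lemma fsys_snd1: "fst (snd (fsys A B g c b x u)) = (1 - fst (snd u)) *\<^sub>R fst (snd x) + fst (snd u) *\<^sub>R fst u"
  by (simp add: fsys_def split: prod.splits)
lemma fsys_snd2: "snd (snd (fsys A B g c b x u)) = min (snd (snd x) + of_int g - fst (snd u) * of_int c) (of_int b)"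
  by (simp add: fsys_def split: prod.splits)


lemma diff_fsys1:
  assumes "fst (snd u) = \<gamma>"
  shows "fst (fsys A B g c b x u) - fst (fsys A B g c b y (uc, \<gamma>, 0)) =
    A *v (fst x - fst y) + B *v ((1-\<gamma>) *\<^sub>R (fst (snd x) - fst (snd y)) + \<gamma> *\<^sub>R (fst u - uc) + snd (snd u))"
  unfolding fsys_fst assms by (simp add: algebra_simps)

lemma diff_fsys2:
  assumes "fst (snd u) = \<gamma>"
  shows "fst (snd (fsys A B g c b x u)) - fst (snd (fsys A B g c b y (uc, \<gamma>, 0))) =
    (1-\<gamma>) *\<^sub>R (fst (snd x) - fst (snd y)) + \<gamma> *\<^sub>R (fst u - uc)"
  unfolding fsys_snd1 assms by (simp add: algebra_simps)

lemma diff_fsys3: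
  assumes "fst (snd u) = \<gamma>" "snd (snd y) = snd (snd x)"
  shows "snd (snd (fsys A B g c b x u)) = snd (snd (fsys A B g c b y (uc, \<gamma>, 0)))"
  unfolding fsys_snd2 assms by simp

lemma M_step:
  "(mpow A (Suc k) + Bpow A B (Suc k) ** K) *v y = A *v ((mpow A k + Bpow A B k ** K) *v y) + B *v (K *v y)"
  unfolding mpow_Suc Bpow_Suc
  by (simp only: matrix_vector_mult_add_rdistrib matrix_vector_right_distrib matrix_vector_mul_assoc[symmetric] add.assoc)

lemma P_step:
  "mpow (A + B ** K) (Suc k) *v y = A *v (mpow (A + B ** K) k *v y) + B *v (K *v (mpow (A + B ** K) k *v y))"
  unfolding mpow_Suc
  by (simp only: matrix_vector_mult_add_rdistrib matrix_vector_mul_assoc[symmetric])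

lemma Psi_step:
  fixes A :: "real^'n^'n" and L :: "real^'q^'n"
  assumes "fst (snd x) = fst (snd xh)" "snd (snd x) = snd (snd xh)" "fst x - fst xh \<in> Psip"
    "w \<in> Wp \<times> {0} \<times> {0}" "v \<in> Vp \<times> {0} \<times> {0}"
    "msum (msum (lin (A - L ** C) Psip) Wp) (lin (- L) Vp) \<subseteq> Psip"
    "x' = fsys A B g c b x u + w"
    "xh' = fsys A B g c b xh u + (L ** C *v fst (x - xh), 0, 0) + (L *v fst v, 0, 0)"
  shows "fst x' - fst xh' \<in> Psip \<and> fst (snd x') = fst (snd xh') \<and> snd (snd x') = snd (snd xh')"
proof -
  have w: "fst w \<in> Wp" "fst (snd w) = 0" "snd (snd w) = 0" using assms(4) by (auto simp: mem_Times_iff)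
  have v: "fst v \<in> Vp" using assms(5) by (auto simp: mem_Times_iff)
  have "fst x' - fst xh' = (A - L ** C) *v (fst x - fst xh) + fst w + (- L) *v fst v"
    unfolding assms(7,8) fsys_fst assms(1) fst_add fst_diff fst_conv
    by (simp add: algebra_simps uminus_mv)
  also have "\<dots> \<in> Psip"
    apply (rule subsetD[OF assms(6)])
    apply (intro msum_mem)
    using assms(3) w(1) v by (auto simp: lin_def)
  finally have 1: "fst x' - fst xh' \<in> Psip" .
  have 2: "fst (snd x') = fst (snd xh')"
    unfolding assms(7,8) using w by (simp add: fsys_snd1 assms(1))
  have 3: "snd (snd x') = snd (snd xh')"
    unfolding assms(7,8) using w by (simp add: fsys_snd2 assms(2))
  show ?thesis using 1 2 3 by blast
qed


theorem proposition1:
  fixes A :: "((real^'n)^'n)" and B :: "((real^'m)^'n)" and C :: "((real^'n)^'q)"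
    and L :: "((real^'q)^'n)" and K :: "((real^'n)^'m)"
    and Wp :: "(real^'n) set" and Vp :: "(real^'q) set"
    and Psip Omegap :: "(real^'n) set"
    and g c b :: int and H h t :: nat
    and \<mu> :: "(real^'m) \<Rightarrow> (real^'n) \<Rightarrow> (real^'n) \<Rightarrow> (real^'m)"
    and \<eta> :: "(real^'n) \<Rightarrow> (real^'n) \<Rightarrow> (real^'n) \<Rightarrow> (real^'m)"
    and Omega :: "((real^'n) \<times> (real^'m) \<times> real) set"
    and ubc :: "nat \<Rightarrow> (real^'m)" and gb :: "nat \<Rightarrow> real"
    and x xh xt xb :: "nat \<Rightarrow> (real^'n) \<times> (real^'m) \<times> real"
    and u :: "nat \<Rightarrow> (real^'m) \<times> real \<times> (real^'m)"
    and w :: "nat \<Rightarrow> (real^'n) \<times> (real^'m) \<times> real"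
    and v :: "nat \<Rightarrow> (real^'q) \<times> (real^'m) \<times> real"
  assumes Wp: "compact Wp" "convex Wp" "0 \<in> Wp"
    and Vp: "compact Vp" "convex Vp" "0 \<in> Vp"
    and gcb: "g \<ge> 1" "c \<ge> g" "b \<ge> c"
    and Psi_inv: "msum (msum (lin (A - L ** C) Psip) Wp) (lin (- L) Vp) \<subseteq> Psip"
    and Psi0: "0 \<in> Psip"
    and Omega0: "0 \<in> Omegap"
    and opt: "opt_ZOH A B L C K Psip Vp H Omegap \<mu> \<eta> Omega
              \<or> opt_pred A B L C K Psip Vp H Omegap \<mu> \<eta> Omega
              \<or> opt_local A B L C K Psip Vp Omegap \<mu> \<eta> Omega"
    and h: "h \<in> {1..H}"
    and gb_t: "gb t = 1"
    and gb_rest: "\<forall>i\<in>{t+1..<t+h}. gb i = 0"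
    and init_Omega: "xh t - xb t \<in> Omega"
    and init_Psi: "x t - xh t \<in> Psip \<times> {0} \<times> {0}"
    and init_xt: "xt t = xh t"
    and u_def: "\<forall>i\<in>{t..<t+h}. u i =
                  (if gb i = 1 then phi1 \<mu> \<eta> (ubc i, gb i, 0) (xh i) (xt i) (xb i)
                   else phi2 \<eta> (ubc i, gb i, 0) (xh i) (xt i) (xb i))"
    and xb_step: "\<forall>i\<in>{t..<t+h}. xb (Suc i) = fsys A B g c b (xb i) (ubc i, gb i, 0)"
    and xt_step: "\<forall>i\<in>{t..<t+h}. xt (Suc i) = fsys A B g c b (xt i) (u i)"
    and x_step: "\<forall>i\<in>{t..<t+h}. x (Suc i) = fsys A B g c b (x i) (u i) + w i"
    and xh_step: "\<forall>i\<in>{t..<t+h}. xh (Suc i) = fsys A B g c b (xh i) (u i)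
                     + (L ** C *v fst (x i - xh i), 0, 0) + (L *v fst (v i), 0, 0)"
    and w_in: "\<forall>i\<in>{t..<t+h}. w i \<in> Wp \<times> {0} \<times> {0}"
    and v_in: "\<forall>i\<in>{t..<t+h}. v i \<in> Vp \<times> {0} \<times> {0}"
  shows "\<forall>i\<in>{t..t+h}.
           xh i \<in> msum {xb i} Omega
         \<and> x i \<in> msum {xh i} (Psip \<times> {0} \<times> {0})
         \<and> msum {xh i} (Psip \<times> {0} \<times> {0})
             \<subseteq> msum (msum {xb i} Omega) (Psip \<times> {0} \<times> {0})"
  proof -
  from h have h1: "1 \<le> h" and hH: "h \<le> H" by auto
  have ucomp: "fst (snd (u i)) = gb i \<and> snd (snd (u i)) = \<eta> (fst (xh i)) (fst (xt i)) (fst (xb i))"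
    if "i \<in> {t..<t+h}" for i
  proof (cases "i = t")
    case True then show ?thesis using u_def that gb_t by (simp add: phi1_def)
  next
    case False
    then have "gb i = 0" using gb_rest that by auto
    then show ?thesis using u_def that by (simp add: phi2_def)
  qed
  have ut: "fst (u t) = \<mu> (ubc t) (fst (xh t)) (fst (xb t))"
    using u_def gb_t h1 by (simp add: phi1_def)
  have gb0: "gb (t+k) = 0" if "0 < k" "k < h" for k using gb_rest that by auto
  define Psi where "Psi = Psip \<times> {(0::real^'m)} \<times> {(0::real)}"
  have PsiI: "fst (x (t+k)) - fst (xh (t+k)) \<in> Psip \<and> fst (snd (x (t+k))) = fst (snd (xh (t+k)))
      \<and> snd (snd (x (t+k))) = snd (snd (xh (t+k)))" if "k \<le> h" for k
    using that
  proof (induction k)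
    case 0 then show ?case using init_Psi by (simp add: mem_Times_iff prod_eq_iff)
  next
    case (Suc k)
    then have IH: "fst (x (t+k)) - fst (xh (t+k)) \<in> Psip \<and> fst (snd (x (t+k))) = fst (snd (xh (t+k)))
      \<and> snd (snd (x (t+k))) = snd (snd (xh (t+k)))" by simp
    have i: "t + k \<in> {t..<t+h}" using Suc by simp
    show ?case
      apply (simp only: add_Suc_right)
      apply (rule Psi_step[where A=A and L=L and C=C and Wp=Wp and Vp=Vp and w="w (t+k)" and v="v (t+k)"
            and B=B and g=g and c=c and b=b and u="u (t+k)" and x="x (t+k)" and xh="xh (t+k)"])
      using IH apply blast
      using IH apply blast
      using IH apply blast
      using w_in i apply blast
      using v_in i apply blast
      using Psi_inv apply blast
      using x_step i apply blast
      using xh_step i apply blast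
      done
  qed
  define N where "N = LCPV L C Psip Vp"
  define d where "d k = fst (xh (t+k)) - fst (xb (t+k))" for k
  define s where "s k = fst (snd (xh (t+k))) - fst (snd (xb (t+k)))" for k
  define z where "z k = fst (xt (t+k)) - fst (xb (t+k))" for k
  define r where "r k = fst (snd (xt (t+k))) - fst (snd (xb (t+k)))" for k
  define n where "n k = L *v (C *v (fst (x (t+k)) - fst (xh (t+k))) + fst (v (t+k)))" for k
  define T where "T k = msumN k (\<lambda>j. lin (mpow A j) N)" for k
  have nN: "n k \<in> N" if "k < h" for k
  proof -
    have "fst (x (t+k)) - fst (xh (t+k)) \<in> Psip" using PsiI that by simp
    moreover have "fst (v (t+k)) \<in> Vp" using v_in that by (auto simp: mem_Times_iff)
    ultimately show ?thesis unfolding n_def N_def LCPV_def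
      by (auto simp: lin_def intro!: msum_mem imageI)
  qed
  have beta: "snd (snd (xh (t+k))) = snd (snd (xb (t+k)))" if "k \<le> h" for k
    using that
  proof (induction k)
    case 0
    from opt obtain S1 S2 where "Omega = S1 \<times> S2 \<times> {0}"
      unfolding opt_ZOH_def opt_pred_def opt_local_def by blast
    then have "snd (snd (xh t - xb t)) = 0" using init_Omega by (auto simp: mem_Times_iff)
    then show ?case by simp
  next
    case (Suc k)
    have i: "t + k \<in> {t..<t+h}" using Suc by simp
    have "snd (snd (fsys A B g c b (xh (t+k)) (u (t+k)))) = snd (snd (fsys A B g c b (xb (t+k)) (ubc (t+k), gb (t+k), 0)))"
      by (rule diff_fsys3) (use ucomp i Suc in auto)
    then show ?case using xh_step xb_step i by simp
  qed
  have dstep: "d (Suc k) = A *v d k + B *v ((1 - gb (t+k)) *\<^sub>R s k + gb (t+k) *\<^sub>R (fst (u (t+k)) - ubc (t+k))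
        + \<eta> (fst (xh (t+k))) (fst (xt (t+k))) (fst (xb (t+k)))) + n k" if "k < h" for k
  proof -
    have i: "t + k \<in> {t..<t+h}" using that by simp
    have e: "fst (fsys A B g c b (xh (t+k)) (u (t+k))) - fst (fsys A B g c b (xb (t+k)) (ubc (t+k), gb (t+k), 0))
       = A *v d k + B *v ((1 - gb (t+k)) *\<^sub>R s k + gb (t+k) *\<^sub>R (fst (u (t+k)) - ubc (t+k))
        + \<eta> (fst (xh (t+k))) (fst (xt (t+k))) (fst (xb (t+k))))"
      unfolding d_def s_def using ucomp[OF i] by (simp add: diff_fsys1)
    have "d (Suc k) = (fst (fsys A B g c b (xh (t+k)) (u (t+k))) - fst (fsys A B g c b (xb (t+k)) (ubc (t+k), gb (t+k), 0)))
        + (L ** C *v (fst (x (t+k)) - fst (xh (t+k))) + L *v fst (v (t+k)))"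
      unfolding d_def using xh_step xb_step i by simp
    also have "\<dots> = A *v d k + B *v ((1 - gb (t+k)) *\<^sub>R s k + gb (t+k) *\<^sub>R (fst (u (t+k)) - ubc (t+k))
        + \<eta> (fst (xh (t+k))) (fst (xt (t+k))) (fst (xb (t+k)))) + n k"
      unfolding e n_def by (simp add: matrix_vector_right_distrib matrix_vector_mul_assoc)
    finally show ?thesis .
  qed
  have sstep: "s (Suc k) = (1 - gb (t+k)) *\<^sub>R s k + gb (t+k) *\<^sub>R (fst (u (t+k)) - ubc (t+k))" if "k < h" for k
  proof -
    have i: "t + k \<in> {t..<t+h}" using that by simp
    have e: "fst (snd (fsys A B g c b (xh (t+k)) (u (t+k)))) - fst (snd (fsys A B g c b (xb (t+k)) (ubc (t+k), gb (t+k), 0)))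
      = (1 - gb (t+k)) *\<^sub>R (fst (snd (xh (t+k))) - fst (snd (xb (t+k)))) + gb (t+k) *\<^sub>R (fst (u (t+k)) - ubc (t+k))"
      by (rule diff_fsys2) (use ucomp[OF i] in blast)
    show ?thesis unfolding s_def using xh_step xb_step i e by simp
  qed
  have zstep: "z (Suc k) = A *v z k + B *v ((1 - gb (t+k)) *\<^sub>R r k + gb (t+k) *\<^sub>R (fst (u (t+k)) - ubc (t+k))
        + \<eta> (fst (xh (t+k))) (fst (xt (t+k))) (fst (xb (t+k))))" if "k < h" for k
  proof -
    have i: "t + k \<in> {t..<t+h}" using that by simp
    have e: "fst (fsys A B g c b (xt (t+k)) (u (t+k))) - fst (fsys A B g c b (xb (t+k)) (ubc (t+k), gb (t+k), 0))
       = A *v z k + B *v ((1 - gb (t+k)) *\<^sub>R r k + gb (t+k) *\<^sub>R (fst (u (t+k)) - ubc (t+k))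
        + \<eta> (fst (xh (t+k))) (fst (xt (t+k))) (fst (xb (t+k))))"
      unfolding z_def r_def using ucomp[OF i] by (simp add: diff_fsys1)
    show ?thesis unfolding z_def using xt_step xb_step i e unfolding z_def by simp
  qed
  have rstep: "r (Suc k) = (1 - gb (t+k)) *\<^sub>R r k + gb (t+k) *\<^sub>R (fst (u (t+k)) - ubc (t+k))" if "k < h" for k
  proof -
    have i: "t + k \<in> {t..<t+h}" using that by simp
    have e: "fst (snd (fsys A B g c b (xt (t+k)) (u (t+k)))) - fst (snd (fsys A B g c b (xb (t+k)) (ubc (t+k), gb (t+k), 0)))
      = (1 - gb (t+k)) *\<^sub>R (fst (snd (xt (t+k))) - fst (snd (xb (t+k)))) + gb (t+k) *\<^sub>R (fst (u (t+k)) - ubc (t+k))"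
      by (rule diff_fsys2) (use ucomp[OF i] in blast)
    show ?thesis unfolding r_def using xt_step xb_step i e by simp
  qed
  have s1: "s 1 = \<mu> (ubc t) (fst (xh t)) (fst (xb t)) - ubc t" using sstep[of 0] h1 gb_t ut by simp
  have sS: "s (Suc k) = s k" if "0 < k" "k < h" for k using sstep[OF that(2)] gb0[OF that] by simp
  have sconst: "s k = s 1" if "1 \<le> k" "k \<le> h" for k
    using that
  proof (induction k)
    case 0 then show ?case by simp
  next
    case (Suc k) then show ?case using sS[of k] by (cases "k = 0") auto
  qed
  have r1: "r 1 = \<mu> (ubc t) (fst (xh t)) (fst (xb t)) - ubc t" using rstep[of 0] h1 gb_t ut by simp
  have rS: "r (Suc k) = r k" if "0 < k" "k < h" for k using rstep[OF that(2)] gb0[OF that] by simp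
  have rconst: "r k = r 1" if "1 \<le> k" "k \<le> h" for k
    using that
  proof (induction k)
    case 0 then show ?case by simp
  next
    case (Suc k) then show ?case using rS[of k] by (cases "k = 0") auto
  qed
  have d1: "d (Suc 0) = A *v d 0 + B *v (\<mu> (ubc t) (fst (xh t)) (fst (xb t)) - ubc t
        + \<eta> (fst (xh t)) (fst (xt t)) (fst (xb t))) + n 0"
    using dstep[of 0] h1 gb_t ut by simp
  have dS: "d (Suc k) = A *v d k + B *v (s k + \<eta> (fst (xh (t+k))) (fst (xt (t+k))) (fst (xb (t+k)))) + n k"
    if "0 < k" "k < h" for k
    using dstep[OF that(2)] gb0[OF that] by simp
  have z1: "z (Suc 0) = A *v z 0 + B *v (\<mu> (ubc t) (fst (xh t)) (fst (xb t)) - ubc t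
        + \<eta> (fst (xh t)) (fst (xt t)) (fst (xb t)))"
    using zstep[of 0] h1 gb_t ut by simp
  have zS: "z (Suc k) = A *v z k + B *v (r k + \<eta> (fst (xh (t+k))) (fst (xt (t+k))) (fst (xb (t+k))))"
    if "0 < k" "k < h" for k
    using zstep[OF that(2)] gb0[OF that] by simp
  have d0: "xh t - xb t = (d 0, s 0, 0)" using beta[of 0] unfolding d_def s_def by (simp add: prod_eq_iff)
  have z0: "z 0 = d 0" unfolding z_def d_def using init_xt by simp
  have OmI: "xh (t+k) - xb (t+k) \<in> Omega" if "k \<le> h" for k
  proof -
    have dk: "xh (t+k) - xb (t+k) = (d k, s k, 0)" using beta[OF that] unfolding d_def s_def by (simp add: prod_eq_iff)
    show ?thesis using opt
    proof (elim disjE)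
      assume o: "opt_ZOH A B L C K Psip Vp H Omegap \<mu> \<eta> Omega"
      then have inc: "\<And>i. i \<in> {1..H} \<Longrightarrow> msum (lin (mpow A i + Bpow A B i ** K) Omegap) (T i) \<subseteq> Omegap"
        and mu: "\<And>\<nu> a bb. \<mu> \<nu> a bb = \<nu> + K *v (a - bb)"
        and eta: "\<And>a bb cc. \<eta> a bb cc = 0"
        and Om: "Omega = Omegap \<times> lin K Omegap \<times> {0}"
        unfolding opt_ZOH_def T_def N_def by blast+
      have D0: "d 0 \<in> Omegap" "s 0 \<in> lin K Omegap" using init_Omega unfolding d0 Om by auto
      have sk: "s k = K *v d 0" if "1 \<le> k" "k \<le> h" for k
        using sconst[OF that] s1 mu unfolding d_def by simp
      have dd: "d (Suc k) = A *v d k + B *v (K *v d 0) + n k" if "k < h" for k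
      proof (cases "k = 0")
        case True then show ?thesis using d1 mu eta unfolding d_def by simp
      next
        case False then show ?thesis using dS[of k] that sk[of k] eta by simp
      qed
      have Z: "d k - (mpow A k + Bpow A B k ** K) *v d 0 \<in> T k" if "k \<le> h" for k
        using that
      proof (induction k)
        case 0 then show ?case by (simp add: T_def Bpow_def)
      next
        case (Suc k)
        then have "d k - (mpow A k + Bpow A B k ** K) *v d 0 \<in> T k" by simp
        then have "A *v (d k - (mpow A k + Bpow A B k ** K) *v d 0) + n k \<in> T (Suc k)"
          unfolding T_def by (rule T_step) (use nN Suc in auto)
        moreover have "d (Suc k) - (mpow A (Suc k) + Bpow A B (Suc k) ** K) *v d 0
            = A *v (d k - (mpow A k + Bpow A B k ** K) *v d 0) + n k"
          using dd[of k] Suc unfolding M_step by (simp add: algebra_simps)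
        ultimately show ?case by simp
      qed
      show ?thesis
      proof (cases "k = 0")
        case True then show ?thesis using init_Omega by simp
      next
        case False
        then have k1: "k \<in> {1..H}" using that hH by auto
        have "d k = (mpow A k + Bpow A B k ** K) *v d 0 + (d k - (mpow A k + Bpow A B k ** K) *v d 0)" by simp
        also have "\<dots> \<in> msum (lin (mpow A k + Bpow A B k ** K) Omegap) (T k)"
          by (rule msum_mem) (use D0 Z[OF that] in \<open>auto simp: lin_def\<close>)
        finally have "d k \<in> Omegap" using inc[OF k1] by blast
        moreover have "s k \<in> lin K Omegap" using sk[of k] False that D0 by (auto simp: lin_def)
        ultimately show ?thesis unfolding dk Om by simp
      qed
    next
      assume o: "opt_pred A B L C K Psip Vp H Omegap \<mu> \<eta> Omega"
      then have inc: "\<And>i. i \<in> {1..H} \<Longrightarrow> msum (lin (mpow (A + B ** K) i) Omegap) (T i) \<subseteq> Omegap"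
        and mu: "\<And>\<nu> a bb. \<mu> \<nu> a bb = \<nu>"
        and eta: "\<And>a bb cc. \<eta> a bb cc = K *v (bb - cc)"
        and Om: "Omega = Omegap \<times> {0} \<times> {0}"
        unfolding opt_pred_def T_def N_def by blast+
      have D0: "d 0 \<in> Omegap" "s 0 = 0" using init_Omega unfolding d0 Om by auto
      have sk: "s k = 0" if "k \<le> h" for k
        using sconst[of k] s1 mu D0 that by (cases "k = 0") auto
      have rk: "r k = 0" if "1 \<le> k" "k \<le> h" for k
        using rconst[OF that] r1 mu by simp
      have zz: "z (Suc k) = A *v z k + B *v (K *v z k)" if "k < h" for k
      proof (cases "k = 0")
        case True then show ?thesis using z1 mu eta unfolding z_def by simp
      next
        case False then show ?thesis using zS[of k] that rk[of k] eta unfolding z_def by simp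
      qed
      have dd: "d (Suc k) = A *v d k + B *v (K *v z k) + n k" if "k < h" for k
      proof (cases "k = 0")
        case True then show ?thesis using d1 mu eta unfolding z_def by simp
      next
        case False then show ?thesis using dS[of k] that sk[of k] eta unfolding z_def by simp
      qed
      have Z: "z k = mpow (A + B ** K) k *v d 0 \<and> d k - z k \<in> T k" if "k \<le> h" for k
        using that
      proof (induction k)
        case 0 then show ?case using z0 by (simp add: T_def)
      next
        case (Suc k)
        have kh': "k \<le> h" using Suc.prems by simp
        have IH: "z k = mpow (A + B ** K) k *v d 0" "d k - z k \<in> T k" using Suc.IH[OF kh'] by blast+
        have "A *v (d k - z k) + n k \<in> T (Suc k)"
          unfolding T_def by (rule T_step[OF IH(2)[unfolded T_def] nN]) (use Suc.prems in simp)
        moreover have "d (Suc k) - z (Suc k) = A *v (d k - z k) + n k"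
        proof -
          have kh: "k < h" using Suc.prems by simp
          show ?thesis unfolding dd[OF kh] zz[OF kh] by (simp add: algebra_simps)
        qed
        moreover have "z (Suc k) = mpow (A + B ** K) (Suc k) *v d 0"
        proof -
          have kh: "k < h" using Suc.prems by simp
          show ?thesis unfolding zz[OF kh] P_step IH(1)[symmetric] ..
        qed
        ultimately show ?case by simp
      qed
      show ?thesis
      proof (cases "k = 0")
        case True then show ?thesis using init_Omega by simp
      next
        case False
        then have k1: "k \<in> {1..H}" using that hH by auto
        have "d k = z k + (d k - z k)" by simp
        also have "\<dots> \<in> msum (lin (mpow (A + B ** K) k) Omegap) (T k)"
          by (rule msum_mem) (use D0 Z[OF that] in \<open>auto simp: lin_def\<close>)
        finally have "d k \<in> Omegap" using inc[OF k1] by blast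
        then show ?thesis unfolding dk Om using sk[OF that] by simp
      qed
    next
      assume o: "opt_local A B L C K Psip Vp Omegap \<mu> \<eta> Omega"
      then have inc: "msum (lin (A + B ** K) Omegap) N \<subseteq> Omegap"
        and mu: "\<And>\<nu> a bb. \<mu> \<nu> a bb = \<nu>"
        and eta: "\<And>a bb cc. \<eta> a bb cc = K *v (a - cc)"
        and Om: "Omega = Omegap \<times> {0} \<times> {0}"
        unfolding opt_local_def N_def by blast+
      have D0: "d 0 \<in> Omegap" "s 0 = 0" using init_Omega unfolding d0 Om by auto
      have sk: "s k = 0" if "k \<le> h" for k
        using sconst[of k] s1 mu D0 that by (cases "k = 0") auto
      have dd: "d (Suc k) = (A + B ** K) *v d k + n k" if "k < h" for k
      proof (cases "k = 0")
        case True then show ?thesis using d1 mu eta unfolding d_def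
          by (simp add: matrix_vector_mult_add_rdistrib matrix_vector_mul_assoc)
      next
        case False then show ?thesis using dS[of k] that sk[of k] eta unfolding d_def
          by (simp add: matrix_vector_mult_add_rdistrib matrix_vector_mul_assoc)
      qed
      have Z: "d k \<in> Omegap" if "k \<le> h" for k
        using that
      proof (induction k)
        case 0 then show ?case using D0 by simp
      next
        case (Suc k)
        then have "d k \<in> Omegap" by simp
        then have "(A + B ** K) *v d k + n k \<in> msum (lin (A + B ** K) Omegap) N"
          by (intro msum_mem) (use nN Suc in \<open>auto simp: lin_def\<close>)
        then show ?case using inc dd[of k] Suc by auto
      qed
      show ?thesis unfolding dk Om using Z[OF that] sk[OF that] by simp
    qed
  qed
  have memS: "zz \<in> msum {a} S" if "zz - a \<in> S" for zz a :: "(real^'n) \<times> (real^'m) \<times> real" and S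
  proof -
    have "zz = a + (zz - a)" by simp
    then show ?thesis using msum_mem[of a "{a}" "zz - a" S] that by simp
  qed
  show ?thesis
  proof
    fix i assume i: "i \<in> {t..t+h}"
    define k where "k = i - t"
    have ik: "i = t + k" and kh: "k \<le> h" using i unfolding k_def by auto
    have A1: "xh i \<in> msum {xb i} Omega" using memS[OF OmI[OF kh]] unfolding ik .
    have P: "x i - xh i \<in> Psip \<times> {0} \<times> {0}" using PsiI[OF kh] unfolding ik by (simp add: mem_Times_iff prod_eq_iff)
    have A2: "x i \<in> msum {xh i} (Psip \<times> {0} \<times> {0})" using memS[OF P] .
    have A3: "msum {xh i} (Psip \<times> {0} \<times> {0}) \<subseteq> msum (msum {xb i} Omega) (Psip \<times> {0} \<times> {0})"
    proof
      fix y assume "y \<in> msum {xh i} (Psip \<times> {0} \<times> {0})"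
      then obtain p where p: "p \<in> Psip \<times> {0} \<times> {0}" "y = xh i + p" unfolding msum_def by blast
      show "y \<in> msum (msum {xb i} Omega) (Psip \<times> {0} \<times> {0})" unfolding p(2) by (rule msum_mem[OF A1 p(1)])
    qed
    show "xh i \<in> msum {xb i} Omega \<and> x i \<in> msum {xh i} (Psip \<times> {0} \<times> {0})
         \<and> msum {xh i} (Psip \<times> {0} \<times> {0}) \<subseteq> msum (msum {xb i} Omega) (Psip \<times> {0} \<times> {0})"
      using A1 A2 A3 by blast
  qed
qed

end
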